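(* Let $\mathcal{C}$ be a subsystem of a TRS $\mathcal{R}$. If $\ell\leftrightarrow^*_\mathcal{C}r$ for every rule $\ell\to r\in\mathcal{R}\setminus\mathcal{C}$, then $t\leftrightarrow^*_\mathcal{C}u$ for every parallel critical pair $(t,u)$ between $\mathcal{R}$ and $\mathcal{R}$.
   Context: A TRS is a set of rules $\ell\to r$ ($\ell\notin\mathcal{V}$, $\mathcal{V}ar(r)\subseteq\mathcal{V}ar(\ell)$); $\leftrightarrow^*_\mathcal{C}$ is the reflexive-transitive-symmetric closure of $\to_\mathcal{C}$. Parallel critical pair between $\mathcal{R}$ and $\mathcal{R}$: for variants (renamings) $\ell\to r$ and $\ell_p\to r_p$ ($p\in P$) of $\mathcal{R}$-rules, pairwise variable-disjoint, where $P$ is a non-empty set of pairwise parallel function-symbol positions of $\ell$, $\sigma$ a most general unifier of $\{\ell_p\approx\ell|_p\}_{p\in P}$, and $\ell_\epsilon\to r_\epsilon$ not a variant of $\ell\to r$ if $P=\{\epsilon\}$: the pair $((\ell\sigma)[r_p\sigma]_{p\in P}, r\sigma)$. *)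

theory Defs
  imports Main
begin

datatype ('f, 'v) "term" = Var 'v | Fun 'f "('f, 'v) term list"

fun vars_term :: "('f, 'v) term \<Rightarrow> 'v set" where
  "vars_term (Var x) = {x}"
| "vars_term (Fun f ts) = (\<Union>t \<in> set ts. vars_term t)"

fun subst_apply :: "('v \<Rightarrow> ('f, 'w) term) \<Rightarrow> ('f, 'v) term \<Rightarrow> ('f, 'w) term" where
  "subst_apply \<sigma> (Var x) = \<sigma> x"
| "subst_apply \<sigma> (Fun f ts) = Fun f (map (subst_apply \<sigma>) ts)"

definition is_Fun :: "('f, 'v) term \<Rightarrow> bool" where
  "is_Fun t \<longleftrightarrow> (\<exists>f ts. t = Fun f ts)"

type_synonym pos = "nat list"

fun is_pos :: "('f, 'v) term \<Rightarrow> pos \<Rightarrow> bool" where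
  "is_pos t [] = True"
| "is_pos (Fun f ts) (i # p) = (i < length ts \<and> is_pos (ts ! i) p)"
| "is_pos (Var x) (i # p) = False"

definition poss :: "('f, 'v) term \<Rightarrow> pos set" where
  "poss t = {p. is_pos t p}"

fun subt_at :: "('f, 'v) term \<Rightarrow> pos \<Rightarrow> ('f, 'v) term" where
  "subt_at t [] = t"
| "subt_at (Fun f ts) (i # p) = subt_at (ts ! i) p"
| "subt_at (Var x) (i # p) = Var x"

fun replace_at :: "('f, 'v) term \<Rightarrow> pos \<Rightarrow> ('f, 'v) term \<Rightarrow> ('f, 'v) term" where
  "replace_at t [] s = s"
| "replace_at (Fun f ts) (i # p) s = Fun f (ts[i := replace_at (ts ! i) p s])"
| "replace_at (Var x) (i # p) s = Var x"

definition fun_poss :: "('f, 'v) term \<Rightarrow> pos set" where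
  "fun_poss t = {p \<in> poss t. is_Fun (subt_at t p)}"

definition parallel_pos :: "pos \<Rightarrow> pos \<Rightarrow> bool" where
  "parallel_pos p q \<longleftrightarrow> \<not> (\<exists>r. q = p @ r) \<and> \<not> (\<exists>r. p = q @ r)"

function par_replace :: "('f, 'v) term \<Rightarrow> pos set \<Rightarrow> (pos \<Rightarrow> ('f, 'v) term) \<Rightarrow> ('f, 'v) term" where
  "par_replace t P s = (if [] \<in> P then s [] else
     (case t of Var x \<Rightarrow> Var x
      | Fun f ts \<Rightarrow> Fun f (map (\<lambda>i. par_replace (ts ! i) {q. i # q \<in> P} (\<lambda>q. s (i # q)))
                             [0..<length ts])))"
  by pat_completeness auto
termination
  by (relation "measure (\<lambda>(t, P, s). size t)")
     (auto simp: less_Suc_eq_le intro: size_list_estimation' nth_mem)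

type_synonym ('f, 'v) rule = "('f, 'v) term \<times> ('f, 'v) term"

definition is_TRS :: "('f, 'v) rule set \<Rightarrow> bool" where
  "is_TRS R \<longleftrightarrow> (\<forall>(l, r) \<in> R. is_Fun l \<and> vars_term r \<subseteq> vars_term l)"

definition rstep :: "('f, 'v) rule set \<Rightarrow> ('f, 'v) term rel" where
  "rstep R = {(s, t). \<exists>p l r \<sigma>. (l, r) \<in> R \<and> p \<in> poss s \<and>
      subt_at s p = subst_apply \<sigma> l \<and> t = replace_at s p (subst_apply \<sigma> r)}"

definition conv :: "('f, 'v) rule set \<Rightarrow> ('f, 'v) term rel" where
  "conv R = (rstep R \<union> (rstep R)\<inverse>)\<^sup>*"

definition vars_rule :: "('f, 'v) rule \<Rightarrow> 'v set" where
  "vars_rule lr = vars_term (fst lr) \<union> vars_term (snd lr)"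

definition is_variant :: "('f, 'v) rule \<Rightarrow> ('f, 'v) rule \<Rightarrow> bool" where
  "is_variant lr lr' \<longleftrightarrow> (\<exists>\<pi>. bij \<pi> \<and>
      fst lr' = subst_apply (Var \<circ> \<pi>) (fst lr) \<and> snd lr' = subst_apply (Var \<circ> \<pi>) (snd lr))"

definition variant_of :: "('f, 'v) rule set \<Rightarrow> ('f, 'v) rule \<Rightarrow> bool" where
  "variant_of R lr' \<longleftrightarrow> (\<exists>lr \<in> R. is_variant lr lr')"

definition mgu_of :: "('v \<Rightarrow> ('f, 'v) term) \<Rightarrow> (('f, 'v) term \<times> ('f, 'v) term) set \<Rightarrow> bool" where
  "mgu_of \<sigma> E \<longleftrightarrow> (\<forall>(s, t) \<in> E. subst_apply \<sigma> s = subst_apply \<sigma> t) \<and>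
     (\<forall>\<tau> :: 'v \<Rightarrow> ('f, 'v) term. (\<forall>(s, t) \<in> E. subst_apply \<tau> s = subst_apply \<tau> t) \<longrightarrow>
        (\<exists>\<delta>. \<forall>x. \<tau> x = subst_apply \<delta> (\<sigma> x)))"

definition par_crit_pair :: "('f, 'v) rule set \<Rightarrow> ('f, 'v) term \<Rightarrow> ('f, 'v) term \<Rightarrow> bool" where
  "par_crit_pair R t u \<longleftrightarrow> (\<exists>l r P lp rp \<theta>.
     variant_of R (l, r) \<and>
     (\<forall>p \<in> P. variant_of R (lp p, rp p)) \<and>
     (\<forall>p \<in> P. vars_rule (l, r) \<inter> vars_rule (lp p, rp p) = {}) \<and>
     (\<forall>p \<in> P. \<forall>q \<in> P. p \<noteq> q \<longrightarrow> vars_rule (lp p, rp p) \<inter> vars_rule (lp q, rp q) = {}) \<and>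
     P \<noteq> {} \<and> P \<subseteq> fun_poss l \<and>
     (\<forall>p \<in> P. \<forall>q \<in> P. p \<noteq> q \<longrightarrow> parallel_pos p q) \<and>
     mgu_of \<theta> ((\<lambda>p. (lp p, subt_at l p)) ` P) \<and>
     (P = {[]} \<longrightarrow> \<not> is_variant (l, r) (lp [], rp [])) \<and>
     t = par_replace (subst_apply \<theta> l) P (\<lambda>p. subst_apply \<theta> (rp p)) \<and>
     u = subst_apply \<theta> r)"

end

theory Submission
  imports Defs
begin

declare par_replace.simps[simp del]

lemma par_replace_Nil: "[] \<in> P \<Longrightarrow> par_replace t P s = s []"
  by (subst par_replace.simps) simp

lemma par_replace_Var: "[] \<notin> P \<Longrightarrow> par_replace (Var x) P s = Var x"
  by (subst par_replace.simps) simp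

lemma par_replace_Fun: "[] \<notin> P \<Longrightarrow> par_replace (Fun f ts) P s =
  Fun f (map (\<lambda>i. par_replace (ts ! i) {q. i # q \<in> P} (\<lambda>q. s (i # q))) [0..<length ts])"
  by (subst par_replace.simps) simp

lemma subst_compose:
  "subst_apply \<tau> (subst_apply \<sigma> t) = subst_apply (\<lambda>x. subst_apply \<tau> (\<sigma> x)) t"
  by (induction t) auto

lemma pos_subst:
  "is_pos s p \<Longrightarrow> is_pos (subst_apply \<tau> s) p \<and>
    subt_at (subst_apply \<tau> s) p = subst_apply \<tau> (subt_at s p) \<and>
    replace_at (subst_apply \<tau> s) p (subst_apply \<tau> u) = subst_apply \<tau> (replace_at s p u)"
proof (induction s arbitrary: p)
  case (Var x)
  then show ?case by (cases p) auto
next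
  case (Fun f ts)
  show ?case
  proof (cases p)
    case Nil then show ?thesis by simp
  next
    case (Cons i q)
    with Fun.prems have i: "i < length ts" and q: "is_pos (ts ! i) q" by auto
    have m: "ts ! i \<in> set ts" using i by simp
    from Fun.IH[OF m q] i show ?thesis
      by (auto simp: Cons map_update intro!: nth_equalityI simp: nth_list_update)
  qed
qed

lemma rstep_subst:
  assumes "(s, t) \<in> rstep R" shows "(subst_apply \<tau> s, subst_apply \<tau> t) \<in> rstep R"
proof -
  from assms obtain p l r \<sigma> where lr: "(l, r) \<in> R" and p: "p \<in> poss s"
    and sp: "subt_at s p = subst_apply \<sigma> l" and t: "t = replace_at s p (subst_apply \<sigma> r)"
    unfolding rstep_def by blast
  from p have ip: "is_pos s p" by (simp add: poss_def)
  note P = pos_subst[OF ip, of \<tau> "subst_apply \<sigma> r"]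
  show ?thesis unfolding rstep_def
    apply (rule CollectI, unfold case_prod_conv)
    apply (rule exI[of _ p], rule exI[of _ l], rule exI[of _ r],
           rule exI[of _ "\<lambda>x. subst_apply \<tau> (\<sigma> x)"])
    using P lr sp t by (auto simp: poss_def subst_compose)
qed

lemma conv_subst:
  assumes "(s, t) \<in> conv R" shows "(subst_apply \<tau> s, subst_apply \<tau> t) \<in> conv R"
  using assms unfolding conv_def
proof (induction rule: rtrancl_induct)
  case base then show ?case by simp
next
  case (step y z)
  then have "(subst_apply \<tau> y, subst_apply \<tau> z) \<in> rstep R \<union> (rstep R)\<inverse>"
    using rstep_subst by blast
  with step.IH show ?case by (rule rtrancl_into_rtrancl)
qed

lemma rstep_ctxt:
  assumes "(s, t) \<in> rstep R" "i < length ts"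
  shows "(Fun f (ts[i := s]), Fun f (ts[i := t])) \<in> rstep R"
proof -
  from assms obtain p l r \<sigma> where lr: "(l, r) \<in> R" and p: "p \<in> poss s"
    and sp: "subt_at s p = subst_apply \<sigma> l" and t: "t = replace_at s p (subst_apply \<sigma> r)"
    unfolding rstep_def by blast
  show ?thesis unfolding rstep_def
    apply (rule CollectI, unfold case_prod_conv)
    apply (rule exI[of _ "i # p"], rule exI[of _ l], rule exI[of _ r], rule exI[of _ \<sigma>])
    using assms(2) lr p sp t by (auto simp: poss_def)
qed

lemma conv_ctxt:
  assumes "(s, t) \<in> conv R" "i < length ts"
  shows "(Fun f (ts[i := s]), Fun f (ts[i := t])) \<in> conv R"
  using assms(1) unfolding conv_def
proof (induction rule: rtrancl_induct)
  case base then show ?case by simp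
next
  case (step y z)
  then have "(Fun f (ts[i := y]), Fun f (ts[i := z])) \<in> rstep R \<union> (rstep R)\<inverse>"
    using rstep_ctxt[OF _ assms(2)] by blast
  with step.IH show ?case by (rule rtrancl_into_rtrancl)
qed

lemma conv_trans: "(a, b) \<in> conv R \<Longrightarrow> (b, c) \<in> conv R \<Longrightarrow> (a, c) \<in> conv R"
  unfolding conv_def by (rule rtrancl_trans)

lemma conv_sym: "(a, b) \<in> conv R \<Longrightarrow> (b, a) \<in> conv R"
  unfolding conv_def
proof -
  assume "(a, b) \<in> (rstep R \<union> (rstep R)\<inverse>)\<^sup>*"
  then have "(b, a) \<in> ((rstep R \<union> (rstep R)\<inverse>)\<inverse>)\<^sup>*" by (simp add: rtrancl_converse)
  moreover have "(rstep R \<union> (rstep R)\<inverse>)\<inverse> = rstep R \<union> (rstep R)\<inverse>" by auto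
  ultimately show "(b, a) \<in> (rstep R \<union> (rstep R)\<inverse>)\<^sup>*" by simp
qed

lemma conv_args:
  "list_all2 (\<lambda>x y. (x, y) \<in> conv R) ts us \<Longrightarrow>
   (Fun f (pre @ ts), Fun f (pre @ us)) \<in> conv R"
proof (induction ts arbitrary: us pre)
  case Nil then show ?case by (simp add: conv_def)
next
  case (Cons t ts)
  then obtain u us' where us: "us = u # us'" and tu: "(t, u) \<in> conv R"
    and rest: "list_all2 (\<lambda>x y. (x, y) \<in> conv R) ts us'"
    by (cases us) auto
  have "(Fun f ((pre @ t # ts)[length pre := t]), Fun f ((pre @ t # ts)[length pre := u])) \<in> conv R"
    by (rule conv_ctxt[OF tu]) simp
  then have 1: "(Fun f (pre @ t # ts), Fun f ((pre @ [u]) @ ts)) \<in> conv R" by simp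
  have 2: "(Fun f ((pre @ [u]) @ ts), Fun f ((pre @ [u]) @ us')) \<in> conv R"
    by (rule Cons.IH[OF rest])
  from conv_trans[OF 1 2] show ?case by (simp add: us)
qed

lemma par_replace_conv:
  "(\<forall>p\<in>P. (s p, s' p) \<in> conv R) \<Longrightarrow> (par_replace t P s, par_replace t P s') \<in> conv R"
proof (induction t P s arbitrary: s' rule: par_replace.induct)
  case (1 t P s)
  show ?case
  proof (cases "[] \<in> P")
    case True then show ?thesis using 1(2) by (simp add: par_replace_Nil)
  next
    case False
    show ?thesis
    proof (cases t)
      case (Var x) then show ?thesis using False by (simp add: conv_def par_replace_Var)
    next
      case (Fun f ts)
      have "list_all2 (\<lambda>x y. (x, y) \<in> conv R)
        (map (\<lambda>i. par_replace (ts ! i) {q. i # q \<in> P} (\<lambda>q. s (i # q))) [0..<length ts])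
        (map (\<lambda>i. par_replace (ts ! i) {q. i # q \<in> P} (\<lambda>q. s' (i # q))) [0..<length ts])"
        unfolding list_all2_conv_all_nth
        using 1(1)[OF False Fun] 1(2) by auto
      from conv_args[OF this, of f "[]"] show ?thesis using False Fun by (simp add: par_replace_Fun)
    qed
  qed
qed

lemma par_replace_id:
  "(\<forall>p\<in>P. is_pos t p \<and> s p = subt_at t p) \<Longrightarrow> par_replace t P s = t"
proof (induction t P s rule: par_replace.induct)
  case (1 t P s)
  show ?case
  proof (cases "[] \<in> P")
    case True then show ?thesis using 1(2) by (simp add: par_replace_Nil)
  next
    case False
    show ?thesis
    proof (cases t)
      case (Var x) then show ?thesis using False by (simp add: par_replace_Var)
    next
      case (Fun f ts)
      have "map (\<lambda>i. par_replace (ts ! i) {q. i # q \<in> P} (\<lambda>q. s (i # q))) [0..<length ts] = ts"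
      proof (rule nth_equalityI)
        fix i assume "i < length (map (\<lambda>i. par_replace (ts ! i) {q. i # q \<in> P} (\<lambda>q. s (i # q))) [0..<length ts])"
        then have i: "i < length ts" by simp
        have "\<forall>q\<in>{q. i # q \<in> P}. is_pos (ts ! i) q \<and> s (i # q) = subt_at (ts ! i) q"
          using 1(2) Fun by fastforce
        from 1(1)[OF False Fun, of i, OF _ this] i
        show "map (\<lambda>i. par_replace (ts ! i) {q. i # q \<in> P} (\<lambda>q. s (i # q))) [0..<length ts] ! i = ts ! i"
          by simp
      qed simp
      then show ?thesis using False Fun by (simp add: par_replace_Fun)
    qed
  qed
qed

theorem mainTheorem14:
  fixes R C :: "('f, 'v) rule set"
  assumes "is_TRS R"
    and "C \<subseteq> R"
    and "\<forall>(l, r) \<in> R - C. (l, r) \<in> conv C"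
    and "par_crit_pair R t u"
  shows "(t, u) \<in> conv C"
proof -
  have inst: "(subst_apply \<sigma> l0, subst_apply \<sigma> r0) \<in> conv C" if "(l0, r0) \<in> R" for l0 r0 \<sigma>
  proof (cases "(l0, r0) \<in> C")
    case True
    have "(subst_apply \<sigma> l0, subst_apply \<sigma> r0) \<in> rstep C"
      unfolding rstep_def
      apply (rule CollectI, unfold case_prod_conv)
      apply (rule exI[of _ "[]"], rule exI[of _ l0], rule exI[of _ r0], rule exI[of _ \<sigma>])
      using True by (simp add: poss_def)
    then show ?thesis unfolding conv_def by blast
  next
    case False
    with that assms(3) have "(l0, r0) \<in> conv C" by auto
    then show ?thesis by (rule conv_subst)
  qed
  have var: "(subst_apply \<theta> l, subst_apply \<theta> r) \<in> conv C" if "variant_of R (l, r)" for l r \<theta>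
  proof -
    from that obtain l0 r0 \<pi> where "(l0, r0) \<in> R" "l = subst_apply (Var \<circ> \<pi>) l0"
      "r = subst_apply (Var \<circ> \<pi>) r0"
      unfolding variant_of_def is_variant_def by auto
    with inst[of l0 r0 "\<lambda>x. \<theta> (\<pi> x)"] show ?thesis by (simp add: subst_compose)
  qed
  from assms(4) obtain l r P lp rp \<theta> where
    vlr: "variant_of R (l, r)" and vp: "\<forall>p \<in> P. variant_of R (lp p, rp p)" and
    PF: "P \<subseteq> fun_poss l" and mgu: "mgu_of \<theta> ((\<lambda>p. (lp p, subt_at l p)) ` P)" and
    t: "t = par_replace (subst_apply \<theta> l) P (\<lambda>p. subst_apply \<theta> (rp p))" and
    u: "u = subst_apply \<theta> r"
    unfolding par_crit_pair_def by blast
  have eq: "\<forall>p\<in>P. subst_apply \<theta> (lp p) = subst_apply \<theta> (subt_at l p)"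
    using mgu unfolding mgu_of_def by auto
  have "\<forall>p\<in>P. is_pos (subst_apply \<theta> l) p \<and>
      subst_apply \<theta> (lp p) = subt_at (subst_apply \<theta> l) p"
  proof
    fix p assume pP: "p \<in> P"
    then have "is_pos l p" using PF by (auto simp: fun_poss_def poss_def)
    from pos_subst[OF this, of \<theta> l] eq pP show "is_pos (subst_apply \<theta> l) p \<and>
      subst_apply \<theta> (lp p) = subt_at (subst_apply \<theta> l) p" by auto
  qed
  then have id: "par_replace (subst_apply \<theta> l) P (\<lambda>p. subst_apply \<theta> (lp p)) = subst_apply \<theta> l"
    by (rule par_replace_id)
  have "(par_replace (subst_apply \<theta> l) P (\<lambda>p. subst_apply \<theta> (rp p)),
         par_replace (subst_apply \<theta> l) P (\<lambda>p. subst_apply \<theta> (lp p))) \<in> conv C"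
    by (rule par_replace_conv) (use vp var conv_sym in blast)
  then have "(t, subst_apply \<theta> l) \<in> conv C" using t id by simp
  from conv_trans[OF this var[OF vlr]] show ?thesis using u by simp
qed

end
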